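(* For all positive integers $m,n,w,d$ with $w\le m$, $$A(m,n,w,d)\le C\left(\binom{m}{w},n,\left\lceil\frac{d}{w}\right\rceil\right).$$
   Context: $J(m,w)$ denotes the set of binary vectors of length $m$ and Hamming weight $w$. Elements of $J(m,w)^n$ are identified with $m\times n$ binary matrices all of whose columns have weight $w$, with binary Hamming distance. $A(m,n,w,d)$ is the maximum cardinality of a nonempty subset of $J(m,w)^n$ with pairwise Hamming distances at least $2d$. $C(q,n,d)$ is the maximum cardinality of a nonempty subset of $[q]^n$, $[q]=\{0,\dots,q-1\}$, with pairwise Hamming distances (number of differing coordinates) at least $d$. *)

theory Defs
  imports Complex_Main
begin

definition J :: "nat \<Rightarrow> nat \<Rightarrow> bool list set" where
  "J m w = {v. length v = m \<and> card {i. i < m \<and> v ! i} = w}"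

text \<open>Elements of J(m,w)^n: lists of n columns (an m x n binary matrix).\<close>
definition Jn :: "nat \<Rightarrow> nat \<Rightarrow> nat \<Rightarrow> bool list list set" where
  "Jn m n w = {X. length X = n \<and> (\<forall>j<n. X ! j \<in> J m w)}"

definition bin_dist :: "nat \<Rightarrow> nat \<Rightarrow> bool list list \<Rightarrow> bool list list \<Rightarrow> nat" where
  "bin_dist m n X Y = card {(i, j). i < m \<and> j < n \<and> X ! j ! i \<noteq> Y ! j ! i}"

definition A :: "nat \<Rightarrow> nat \<Rightarrow> nat \<Rightarrow> nat \<Rightarrow> nat" where
  "A m n w d = Max {card S | S. S \<noteq> {} \<and> S \<subseteq> Jn m n w \<and>
      (\<forall>X\<in>S. \<forall>Y\<in>S. X \<noteq> Y \<longrightarrow> bin_dist m n X Y \<ge> 2 * d)}"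

definition words :: "nat \<Rightarrow> nat \<Rightarrow> nat list set" where
  "words q n = {x. length x = n \<and> (\<forall>i<n. x ! i < q)}"

definition ham_dist :: "nat \<Rightarrow> nat list \<Rightarrow> nat list \<Rightarrow> nat" where
  "ham_dist n x y = card {i. i < n \<and> x ! i \<noteq> y ! i}"

definition C :: "nat \<Rightarrow> nat \<Rightarrow> nat \<Rightarrow> nat" where
  "C q n d = Max {card S | S. S \<noteq> {} \<and> S \<subseteq> words q n \<and>
      (\<forall>x\<in>S. \<forall>y\<in>S. x \<noteq> y \<longrightarrow> ham_dist n x y \<ge> d)}"

end

theory Submission
  imports Defs
begin

lemma J_card: "finite (J m w) \<and> card (J m w) = m choose w"
proof -
  let ?f = "\<lambda>v::bool list. {i. i < m \<and> v ! i}"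
  let ?K = "{B. B \<subseteq> {..<m} \<and> card B = w}"
  have inj: "inj_on ?f (J m w)"
  proof (rule inj_onI)
    fix u v assume u: "u \<in> J m w" and v: "v \<in> J m w" and e: "?f u = ?f v"
    have "length u = m" "length v = m" using u v by (auto simp: J_def)
    moreover have "\<forall>i<m. u ! i = v ! i"
    proof (intro allI impI)
      fix i assume "i < m"
      have "(i \<in> ?f u) = (i \<in> ?f v)" using e by simp
      then show "u ! i = v ! i" using \<open>i < m\<close> by simp
    qed
    ultimately show "u = v" by (simp add: nth_equalityI)
  qed
  have img: "?f ` J m w = ?K"
  proof
    show "?f ` J m w \<subseteq> ?K" by (auto simp: J_def)
    show "?K \<subseteq> ?f ` J m w"
    proof
      fix B assume B: "B \<in> ?K"
      let ?v = "map (\<lambda>i. i \<in> B) [0..<m]"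
      have "?f ?v = B" using B by auto
      moreover have "?v \<in> J m w" using B \<open>?f ?v = B\<close> by (simp add: J_def)
      ultimately show "B \<in> ?f ` J m w" by blast
    qed
  qed
  have fK: "finite ?K" by (rule finite_subset[of _ "Pow {..<m}"]) auto
  have "finite (?f ` J m w)" using fK img by simp
  hence "finite (J m w)" using finite_imageD[OF _ inj] by blast
  moreover have "card (J m w) = card ?K" using card_image[OF inj] img by simp
  moreover have "card ?K = m choose w" using n_subsets[of "{..<m}" w] by simp
  ultimately show ?thesis by simp
qed

lemma col_dist:
  assumes "u \<in> J m w" "v \<in> J m w"
  shows "card {i. i < m \<and> u ! i \<noteq> v ! i} \<le> 2 * w"
proof -
  have "{i. i < m \<and> u ! i \<noteq> v ! i} \<subseteq> {i. i < m \<and> u ! i} \<union> {i. i < m \<and> v ! i}" by auto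
  hence "card {i. i < m \<and> u ! i \<noteq> v ! i} \<le> card ({i. i < m \<and> u ! i} \<union> {i. i < m \<and> v ! i})"
    by (intro card_mono) auto
  also have "\<dots> \<le> card {i. i < m \<and> u ! i} + card {i. i < m \<and> v ! i}" by (rule card_Un_le)
  finally show ?thesis using assms by (simp add: J_def)
qed

lemma bin_le:
  assumes X: "X \<in> Jn m n w" and Y: "Y \<in> Jn m n w"
  shows "bin_dist m n X Y \<le> 2 * w * card {j. j < n \<and> X ! j \<noteq> Y ! j}"
proof -
  let ?D = "{j. j < n \<and> X ! j \<noteq> Y ! j}"
  let ?G = "\<lambda>j. (\<lambda>i. (i, j)) ` {i. i < m \<and> X ! j ! i \<noteq> Y ! j ! i}"
  have "{(i, j). i < m \<and> j < n \<and> X ! j ! i \<noteq> Y ! j ! i} \<subseteq> (\<Union>j\<in>?D. ?G j)" by auto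
  hence "bin_dist m n X Y \<le> card (\<Union>j\<in>?D. ?G j)" unfolding bin_dist_def
    by (intro card_mono) auto
  also have "\<dots> \<le> (\<Sum>j\<in>?D. card (?G j))" by (rule card_UN_le) auto
  also have "\<dots> \<le> (\<Sum>j\<in>?D. 2 * w)"
  proof (rule sum_mono)
    fix j assume "j \<in> ?D"
    hence "X ! j \<in> J m w" "Y ! j \<in> J m w" using X Y by (auto simp: Jn_def)
    hence "card {i. i < m \<and> X ! j ! i \<noteq> Y ! j ! i} \<le> 2 * w" by (rule col_dist)
    moreover have "card (?G j) \<le> card {i. i < m \<and> X ! j ! i \<noteq> Y ! j ! i}"
      by (rule card_image_le) simp
    ultimately show "card (?G j) \<le> 2 * w" by linarith
  qed
  finally show ?thesis by (simp add: mult.commute)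
qed

theorem proposition10:
  fixes m n w d :: nat
  assumes "0 < m" "0 < n" "0 < w" "0 < d" "w \<le> m"
  shows "A m n w d \<le> C (m choose w) n (nat \<lceil>real d / real w\<rceil>)"
proof -
  have fJ: "finite (J m w)" and cJ: "card (J m w) = m choose w" using J_card by auto
  obtain h where h: "bij_betw h (J m w) {0..<card (J m w)}" using ex_bij_betw_finite_nat[OF fJ] by blast
  have hinj: "inj_on h (J m w)" using h bij_betw_def by blast
  have hrange: "\<And>v. v \<in> J m w \<Longrightarrow> h v < (m choose w)" using h cJ bij_betwE by fastforce
  let ?PA = "\<lambda>S. S \<noteq> {} \<and> S \<subseteq> Jn m n w \<and>
      (\<forall>X\<in>S. \<forall>Y\<in>S. X \<noteq> Y \<longrightarrow> bin_dist m n X Y \<ge> 2 * d)"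
  let ?SA = "{card S | S. ?PA S}"
  have fJn: "finite (Jn m n w)"
    by (rule finite_subset[OF _ finite_lists_length_eq[OF fJ, of n]])
       (auto simp: Jn_def in_set_conv_nth)
  have finA: "finite ?SA"
    by (rule finite_subset[of _ "{..card (Jn m n w)}"]) (auto intro: card_mono[OF fJn])
  define v where "v = replicate w True @ replicate (m - w) False"
  have "{i. i < m \<and> v ! i} = {..<w}" using assms(5)
    by (auto simp: v_def nth_append) (metis diff_less_mono not_less nth_replicate)
  hence vJ: "v \<in> J m w" using assms(5) by (simp add: J_def v_def)
  have "replicate n v \<in> Jn m n w" using vJ by (simp add: Jn_def)
  hence "?PA {replicate n v}" by auto
  hence neA: "?SA \<noteq> {}" by blast
  obtain S where S: "?PA S" "A m n w d = card S"
    using Max_in[OF finA neA] unfolding A_def by blast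
  let ?q = "m choose w" and ?e = "nat \<lceil>real d / real w\<rceil>"
  let ?PC = "\<lambda>S. S \<noteq> {} \<and> S \<subseteq> words ?q n \<and>
      (\<forall>x\<in>S. \<forall>y\<in>S. x \<noteq> y \<longrightarrow> ham_dist n x y \<ge> ?e)"
  have fw: "finite (words ?q n)"
    by (rule finite_subset[OF _ finite_lists_length_eq[of "{..<?q}" n]])
       (auto simp: words_def in_set_conv_nth)
  have finC: "finite {card S | S. ?PC S}"
    by (rule finite_subset[of _ "{..card (words ?q n)}"]) (auto intro: card_mono[OF fw])
  let ?g = "\<lambda>X. map h X"
  have injg: "inj_on ?g S"
  proof (rule inj_onI)
    fix X Y assume XS: "X \<in> S" and YS: "Y \<in> S" and e: "map h X = map h Y"
    have X: "X \<in> Jn m n w" and Y: "Y \<in> Jn m n w" using S XS YS by auto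
    have l: "length X = n" "length Y = n" using X Y by (auto simp: Jn_def)
    have "\<forall>j<n. X ! j = Y ! j"
    proof (intro allI impI)
      fix j assume j: "j < n"
      have "map h X ! j = map h Y ! j" using e by simp
      hence "h (X ! j) = h (Y ! j)" using l j by simp
      moreover have "X ! j \<in> J m w" "Y ! j \<in> J m w" using X Y j by (auto simp: Jn_def)
      ultimately show "X ! j = Y ! j" using inj_onD[OF hinj] by blast
    qed
    thus "X = Y" using l by (simp add: nth_equalityI)
  qed
  have PC: "?PC (?g ` S)"
  proof (intro conjI)
    show "?g ` S \<noteq> {}" using S by auto
    show "?g ` S \<subseteq> words ?q n"
    proof
      fix x assume "x \<in> ?g ` S"
      then obtain X where XS: "X \<in> S" and x: "x = map h X" by blast
      have X: "X \<in> Jn m n w" using S XS by auto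
      thus "x \<in> words ?q n" using hrange by (auto simp: x words_def Jn_def)
    qed
    show "\<forall>x\<in>?g ` S. \<forall>y\<in>?g ` S. x \<noteq> y \<longrightarrow> ham_dist n x y \<ge> ?e"
    proof (intro ballI impI)
      fix x y assume "x \<in> ?g ` S" "y \<in> ?g ` S" and ne: "x \<noteq> y"
      then obtain X Y where XS: "X \<in> S" and YS: "Y \<in> S" and x: "x = map h X" and y: "y = map h Y"
        by blast
      have X: "X \<in> Jn m n w" and Y: "Y \<in> Jn m n w" using S XS YS by auto
      have l: "length X = n" "length Y = n" using X Y by (auto simp: Jn_def)
      have XY: "X \<noteq> Y" using ne x y by blast
      have Deq: "{i. i < n \<and> x ! i \<noteq> y ! i} = {j. j < n \<and> X ! j \<noteq> Y ! j}"
      proof -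
        have "\<And>j. j < n \<Longrightarrow> (x ! j \<noteq> y ! j) = (X ! j \<noteq> Y ! j)"
        proof -
          fix j assume j: "j < n"
          have "X ! j \<in> J m w" "Y ! j \<in> J m w" using X Y j by (auto simp: Jn_def)
          thus "(x ! j \<noteq> y ! j) = (X ! j \<noteq> Y ! j)"
            using hinj j l by (auto simp: x y inj_on_def)
        qed
        thus ?thesis by blast
      qed
      let ?k = "card {j. j < n \<and> X ! j \<noteq> Y ! j}"
      have "2 * d \<le> bin_dist m n X Y" using S(1) XS YS XY by blast
      hence "2 * d \<le> 2 * w * ?k" using bin_le[OF X Y] by linarith
      hence "d \<le> w * ?k" by simp
      hence "real d \<le> real w * real ?k" by (simp only: of_nat_mult[symmetric] of_nat_le_iff)
      hence "real d / real w \<le> real ?k" using assms(3) by (simp add: divide_le_eq mult.commute)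
      hence "\<lceil>real d / real w\<rceil> \<le> int ?k" by (simp add: ceiling_le_iff)
      hence "?e \<le> ?k" by linarith
      thus "?e \<le> ham_dist n x y" by (simp add: ham_dist_def Deq)
    qed
  qed
  have "card (?g ` S) \<le> C ?q n ?e" unfolding C_def
    by (rule Max_ge[OF finC]) (use PC in blast)
  thus ?thesis using S card_image[OF injg] by simp
qed

end
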